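(* Let $\mathbb{C}$ be a regular Gumm category. Suppose given objects and morphisms $\varphi\colon P\to Z$, $\sigma\colon Z\to P$, $x\colon P\to X$, $f\colon X\to Y$, $s\colon Y\to X$, $y\colon Z\to Y$, $u\colon X\to U$, $v\colon Y\to V$, $w\colon U\to V$ in $\mathbb{C}$ such that: (i) $\varphi\sigma=1_Z$ and $fs=1_Y$ (so $\varphi$ and $f$ are split epimorphisms), $x\sigma=sy$, and $fx=y\varphi$; (ii) $x$ and $y$ are regular epimorphisms; (iii) $wu=vf$; (iv) the outer rectangle is a pullback, i.e. the square with sides $\varphi\colon P\to Z$, $ux\colon P\to U$, $vy\colon Z\to V$, $w\colon U\to V$ is a pullback (so $P\cong Z\times_V U$). Then both the left square ($fx=y\varphi$) and the right square ($wu=vf$) are pullbacks.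
   Context: A regular category is a finitely complete category in which every kernel pair has a coequaliser and regular epimorphisms are stable under pullback. For equivalence relations $R,S$ on an object $X$ of a finitely complete category, $R\,\square\, S$ denotes the largest double equivalence relation on $R$ and $S$: in terms of generalized elements, it is the relation on $R$ consisting of pairs $((a,b),(c,d))$ with $(a,b),(c,d)\in R$, $(a,c)\in S$ and $(b,d)\in S$; its two projections $\pi_1,\pi_2\colon R\square S\to R$ send such a pair to $(a,b)$ and $(c,d)$ respectively. If $T$ is another equivalence relation on $X$ with $R\wedge S\le T\le R$, there is a canonical inclusion $(i,j)$ of $T\square S$ into $R\square S$ over the inclusion $i\colon T\to R$. A finitely complete category is a Gumm category if for all equivalence relations $R,S,T$ on a same object with $R\wedge S\le T\le R$, this inclusion is a discrete fibration, i.e. the commutative squares $i\pi_k=\pi_k j$ ($k=1,2$) are pullbacks. *)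

theory Defs
  imports Main
begin

text \<open>Categories as records: objects, arrows, domain, codomain, composition
  (cmp C g f = g after f), identities.\<close>

record ('o, 'm) cat =
  Obj :: "'o set"
  Arr :: "'m set"
  Dom :: "'m \<Rightarrow> 'o"
  Cod :: "'m \<Rightarrow> 'o"
  cmp :: "'m \<Rightarrow> 'm \<Rightarrow> 'm"
  idn :: "'o \<Rightarrow> 'm"

definition hom :: "('o, 'm) cat \<Rightarrow> 'm \<Rightarrow> 'o \<Rightarrow> 'o \<Rightarrow> bool" where
  "hom C f A B \<longleftrightarrow> f \<in> Arr C \<and> Dom C f = A \<and> Cod C f = B \<and> A \<in> Obj C \<and> B \<in> Obj C"

definition category :: "('o, 'm) cat \<Rightarrow> bool" where
  "category C \<longleftrightarrow>
     (\<forall>f \<in> Arr C. Dom C f \<in> Obj C \<and> Cod C f \<in> Obj C) \<and>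
     (\<forall>A \<in> Obj C. hom C (idn C A) A A) \<and>
     (\<forall>A B C' f g. hom C f A B \<longrightarrow> hom C g B C' \<longrightarrow> hom C (cmp C g f) A C') \<and>
     (\<forall>A B f. hom C f A B \<longrightarrow> cmp C (idn C B) f = f \<and> cmp C f (idn C A) = f) \<and>
     (\<forall>A B C' D f g h. hom C f A B \<longrightarrow> hom C g B C' \<longrightarrow> hom C h C' D \<longrightarrow>
        cmp C h (cmp C g f) = cmp C (cmp C h g) f)"

definition is_pullback :: "('o, 'm) cat \<Rightarrow> 'm \<Rightarrow> 'm \<Rightarrow> 'm \<Rightarrow> 'm \<Rightarrow> bool" where
  "is_pullback C f g p q \<longleftrightarrow>
     f \<in> Arr C \<and> g \<in> Arr C \<and> p \<in> Arr C \<and> q \<in> Arr C \<and>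
     Cod C f = Cod C g \<and> Dom C p = Dom C q \<and>
     Cod C p = Dom C f \<and> Cod C q = Dom C g \<and>
     cmp C f p = cmp C g q \<and>
     (\<forall>W a b. hom C a W (Dom C f) \<longrightarrow> hom C b W (Dom C g) \<longrightarrow> cmp C f a = cmp C g b \<longrightarrow>
        (\<exists>!h. hom C h W (Dom C p) \<and> cmp C p h = a \<and> cmp C q h = b))"

definition is_terminal :: "('o, 'm) cat \<Rightarrow> 'o \<Rightarrow> bool" where
  "is_terminal C T \<longleftrightarrow> T \<in> Obj C \<and> (\<forall>A \<in> Obj C. \<exists>!h. hom C h A T)"

definition finitely_complete :: "('o, 'm) cat \<Rightarrow> bool" where
  "finitely_complete C \<longleftrightarrow> category C \<and> (\<exists>T. is_terminal C T) \<and>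
     (\<forall>f g. f \<in> Arr C \<longrightarrow> g \<in> Arr C \<longrightarrow> Cod C f = Cod C g \<longrightarrow>
        (\<exists>p q. is_pullback C f g p q))"

definition is_coequalizer :: "('o, 'm) cat \<Rightarrow> 'm \<Rightarrow> 'm \<Rightarrow> 'm \<Rightarrow> bool" where
  "is_coequalizer C a b e \<longleftrightarrow>
     a \<in> Arr C \<and> b \<in> Arr C \<and> e \<in> Arr C \<and>
     Dom C a = Dom C b \<and> Cod C a = Cod C b \<and> Dom C e = Cod C a \<and>
     cmp C e a = cmp C e b \<and>
     (\<forall>W g. hom C g (Cod C a) W \<longrightarrow> cmp C g a = cmp C g b \<longrightarrow>
        (\<exists>!h. hom C h (Cod C e) W \<and> cmp C h e = g))"

definition regular_epi :: "('o, 'm) cat \<Rightarrow> 'm \<Rightarrow> bool" where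
  "regular_epi C e \<longleftrightarrow> (\<exists>a b. is_coequalizer C a b e)"

definition is_kernel_pair :: "('o, 'm) cat \<Rightarrow> 'm \<Rightarrow> 'm \<Rightarrow> 'm \<Rightarrow> bool" where
  "is_kernel_pair C f p q \<longleftrightarrow> is_pullback C f f p q"

definition regular_category :: "('o, 'm) cat \<Rightarrow> bool" where
  "regular_category C \<longleftrightarrow> finitely_complete C \<and>
     (\<forall>f p q. is_kernel_pair C f p q \<longrightarrow> (\<exists>e. is_coequalizer C p q e)) \<and>
     (\<forall>f g p q. is_pullback C f g p q \<longrightarrow> regular_epi C f \<longrightarrow> regular_epi C q)"

text \<open>Internal relations via generalized elements.  A relation (R, r1, r2) on X:
  r1, r2 : R \<rightarrow> X jointly monic.  Membership of a generalized element
  (a, b) with a, b : W \<rightarrow> X.\<close>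

definition rel_mem :: "('o, 'm) cat \<Rightarrow> 'o \<Rightarrow> 'm \<Rightarrow> 'm \<Rightarrow> 'm \<Rightarrow> 'm \<Rightarrow> bool" where
  "rel_mem C R r1 r2 a b \<longleftrightarrow> (\<exists>h. hom C h (Dom C a) R \<and> cmp C r1 h = a \<and> cmp C r2 h = b)"

definition jointly_monic :: "('o, 'm) cat \<Rightarrow> 'o \<Rightarrow> 'm \<Rightarrow> 'm \<Rightarrow> bool" where
  "jointly_monic C R r1 r2 \<longleftrightarrow>
     (\<forall>W h k. hom C h W R \<longrightarrow> hom C k W R \<longrightarrow> cmp C r1 h = cmp C r1 k \<longrightarrow>
        cmp C r2 h = cmp C r2 k \<longrightarrow> h = k)"

definition is_relation :: "('o, 'm) cat \<Rightarrow> 'o \<Rightarrow> 'o \<Rightarrow> 'm \<Rightarrow> 'm \<Rightarrow> bool" where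
  "is_relation C X R r1 r2 \<longleftrightarrow> hom C r1 R X \<and> hom C r2 R X \<and> jointly_monic C R r1 r2"

definition equiv_rel :: "('o, 'm) cat \<Rightarrow> 'o \<Rightarrow> 'o \<Rightarrow> 'm \<Rightarrow> 'm \<Rightarrow> bool" where
  "equiv_rel C X R r1 r2 \<longleftrightarrow> is_relation C X R r1 r2 \<and>
     (\<forall>W a. hom C a W X \<longrightarrow> rel_mem C R r1 r2 a a) \<and>
     (\<forall>W a b. hom C a W X \<longrightarrow> hom C b W X \<longrightarrow> rel_mem C R r1 r2 a b \<longrightarrow> rel_mem C R r1 r2 b a) \<and>
     (\<forall>W a b c. hom C a W X \<longrightarrow> hom C b W X \<longrightarrow> hom C c W X \<longrightarrow>
        rel_mem C R r1 r2 a b \<longrightarrow> rel_mem C R r1 r2 b c \<longrightarrow> rel_mem C R r1 r2 a c)"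

text \<open>(D, p1, p2) is R \<box> S: jointly monic pair p1, p2 : D \<rightarrow> R whose generalized
  elements are exactly the pairs (g1, g2) of elements of R with
  (r1 g1, r1 g2) \<in> S and (r2 g1, r2 g2) \<in> S.\<close>
definition is_square_rel :: "('o, 'm) cat \<Rightarrow> 'o \<Rightarrow> 'm \<Rightarrow> 'm \<Rightarrow> 'o \<Rightarrow> 'm \<Rightarrow> 'm \<Rightarrow>
    'o \<Rightarrow> 'm \<Rightarrow> 'm \<Rightarrow> bool" where
  "is_square_rel C R r1 r2 S s1 s2 D p1 p2 \<longleftrightarrow>
     hom C p1 D R \<and> hom C p2 D R \<and> jointly_monic C D p1 p2 \<and>
     (\<forall>W g1 g2. hom C g1 W R \<longrightarrow> hom C g2 W R \<longrightarrow>
        ((\<exists>h. hom C h W D \<and> cmp C p1 h = g1 \<and> cmp C p2 h = g2) \<longleftrightarrow>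
         (rel_mem C S s1 s2 (cmp C r1 g1) (cmp C r1 g2) \<and>
          rel_mem C S s1 s2 (cmp C r2 g1) (cmp C r2 g2))))"

definition gumm_category :: "('o, 'm) cat \<Rightarrow> bool" where
  "gumm_category C \<longleftrightarrow> finitely_complete C \<and>
     (\<forall>X R r1 r2 S s1 s2 T t1 t2 i D p1 p2 E q1 q2 j.
        equiv_rel C X R r1 r2 \<longrightarrow> equiv_rel C X S s1 s2 \<longrightarrow> equiv_rel C X T t1 t2 \<longrightarrow>
        (\<forall>W a b. hom C a W X \<longrightarrow> hom C b W X \<longrightarrow>
           rel_mem C R r1 r2 a b \<longrightarrow> rel_mem C S s1 s2 a b \<longrightarrow> rel_mem C T t1 t2 a b) \<longrightarrow>
        (\<forall>W a b. hom C a W X \<longrightarrow> hom C b W X \<longrightarrow>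
           rel_mem C T t1 t2 a b \<longrightarrow> rel_mem C R r1 r2 a b) \<longrightarrow>
        hom C i T R \<longrightarrow> cmp C r1 i = t1 \<longrightarrow> cmp C r2 i = t2 \<longrightarrow>
        is_square_rel C R r1 r2 S s1 s2 D p1 p2 \<longrightarrow>
        is_square_rel C T t1 t2 S s1 s2 E q1 q2 \<longrightarrow>
        hom C j E D \<longrightarrow> cmp C p1 j = cmp C i q1 \<longrightarrow> cmp C p2 j = cmp C i q2 \<longrightarrow>
        is_pullback C i p1 q1 j \<and> is_pullback C i p2 q2 j)"

end

theory Submission
  imports Defs
begin

lemma hom_D: "hom C f A B \<Longrightarrow> f \<in> Arr C \<and> Dom C f = A \<and> Cod C f = B \<and> A \<in> Obj C \<and> B \<in> Obj C"
  by (simp add: hom_def)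

lemma cmp_hom: "category C \<Longrightarrow> hom C f A B \<Longrightarrow> hom C g B D \<Longrightarrow> hom C (cmp C g f) A D"
  unfolding category_def by blast

lemma cmp_assoc: "category C \<Longrightarrow> hom C f A B \<Longrightarrow> hom C g B D \<Longrightarrow> hom C h D E \<Longrightarrow>
   cmp C h (cmp C g f) = cmp C (cmp C h g) f"
  unfolding category_def by blast

lemma id_hom: "category C \<Longrightarrow> A \<in> Obj C \<Longrightarrow> hom C (idn C A) A A"
  unfolding category_def by blast

lemma id_l: "category C \<Longrightarrow> hom C f A B \<Longrightarrow> cmp C (idn C B) f = f"
  unfolding category_def by blast

lemma id_r: "category C \<Longrightarrow> hom C f A B \<Longrightarrow> cmp C f (idn C A) = f"
  unfolding category_def by blast

lemma arr_hom: "category C \<Longrightarrow> f \<in> Arr C \<Longrightarrow> hom C f (Dom C f) (Cod C f)"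
  unfolding category_def hom_def by blast

lemma pb_homs:
  assumes cat: "category C" and pb: "is_pullback C f g p q" and hf: "hom C f A B0" and hg: "hom C g B B0"
  shows "hom C p (Dom C p) A \<and> hom C q (Dom C p) B"
proof -
  have "p \<in> Arr C" "q \<in> Arr C" "Cod C p = A" "Cod C q = B" "Dom C q = Dom C p"
    using pb hf hg unfolding is_pullback_def hom_def by auto
  thus ?thesis using arr_hom[OF cat] by metis
qed

lemma pb_ex:
  assumes cat: "category C" and pb: "is_pullback C f g p q" and hf: "hom C f A B0" and hg: "hom C g B B0"
    and ha: "hom C a W A" and hb: "hom C b W B" and e: "cmp C f a = cmp C g b"
  shows "\<exists>h. hom C h W (Dom C p) \<and> cmp C p h = a \<and> cmp C q h = b"
  using pb hf hg ha hb e unfolding is_pullback_def hom_def by metis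

lemma pb_uniq:
  assumes cat: "category C" and pb: "is_pullback C f g p q" and hf: "hom C f A B0" and hg: "hom C g B B0"
    and hh: "hom C h W (Dom C p)" and hk: "hom C k W (Dom C p)"
    and e1: "cmp C p h = cmp C p k" and e2: "cmp C q h = cmp C q k"
  shows "h = k"
proof -
  have hp: "hom C p (Dom C p) A" and hq: "hom C q (Dom C p) B" using pb_homs[OF cat pb hf hg] by auto
  have c: "cmp C f p = cmp C g q" using pb unfolding is_pullback_def by auto
  have "cmp C f (cmp C p h) = cmp C g (cmp C q h)"
    using cmp_assoc[OF cat hh hp hf] cmp_assoc[OF cat hh hq hg] c by simp
  moreover have "hom C (cmp C p h) W (Dom C f)" "hom C (cmp C q h) W (Dom C g)"
    using cmp_hom[OF cat hh hp] cmp_hom[OF cat hh hq] hf hg by (auto simp: hom_def)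
  ultimately have "\<exists>!m. hom C m W (Dom C p) \<and> cmp C p m = cmp C p h \<and> cmp C q m = cmp C q h"
    using pb unfolding is_pullback_def by blast
  thus ?thesis using hh hk e1 e2 by metis
qed

lemma pb_comm: "is_pullback C f g p q \<Longrightarrow> cmp C f p = cmp C g q"
  unfolding is_pullback_def by auto

lemma kp_exists:
  assumes fc: "finitely_complete C" and hf: "hom C f A B"
  shows "\<exists>K k1 k2. is_pullback C f f k1 k2 \<and> hom C k1 K A \<and> hom C k2 K A"
proof -
  have cat: "category C" using fc by (simp add: finitely_complete_def)
  obtain k1 k2 where pb: "is_pullback C f f k1 k2" using fc hf unfolding finitely_complete_def hom_def by blast
  thus ?thesis using pb_homs[OF cat pb hf hf] by blast
qed

lemma kp_rel:
  assumes cat: "category C" and pb: "is_pullback C f f k1 k2" and hf: "hom C f A B"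
    and hk1: "hom C k1 K A" and ha: "hom C a W A" and hb: "hom C b W A"
  shows "rel_mem C K k1 k2 a b \<longleftrightarrow> cmp C f a = cmp C f b"
proof
  have hk2: "hom C k2 K A" using pb_homs[OF cat pb hf hf] hk1 by (auto simp: hom_def)
  assume "rel_mem C K k1 k2 a b"
  then obtain h where hh: "hom C h W K" and e: "cmp C k1 h = a" "cmp C k2 h = b"
    using ha unfolding rel_mem_def hom_def by auto
  show "cmp C f a = cmp C f b"
    using e cmp_assoc[OF cat hh hk1 hf] cmp_assoc[OF cat hh hk2 hf] pb_comm[OF pb] by simp
next
  assume e: "cmp C f a = cmp C f b"
  have K: "Dom C k1 = K" using hk1 by (simp add: hom_def)
  show "rel_mem C K k1 k2 a b"
    using pb_ex[OF cat pb hf hf ha hb e] K ha unfolding rel_mem_def hom_def by auto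
qed

lemma kp_equiv:
  assumes cat: "category C" and pb: "is_pullback C f f k1 k2" and hf: "hom C f A B"
    and hk1: "hom C k1 K A"
  shows "equiv_rel C A K k1 k2"
proof -
  have hk2: "hom C k2 K A" using pb_homs[OF cat pb hf hf] hk1 by (auto simp: hom_def)
  have K: "Dom C k1 = K" using hk1 by (simp add: hom_def)
  have jm: "jointly_monic C K k1 k2"
    unfolding jointly_monic_def using pb_uniq[OF cat pb hf hf] K by metis
  show ?thesis unfolding equiv_rel_def is_relation_def
    using jm hk1 hk2 kp_rel[OF cat pb hf hk1] by metis
qed

lemma reg_epi:
  assumes cat: "category C" and r: "regular_epi C e" and he: "hom C e A B"
    and hg: "hom C g B W" and hh: "hom C h B W" and eq: "cmp C g e = cmp C h e"
  shows "g = h"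
proof -
  obtain a b where co: "is_coequalizer C a b e" using r unfolding regular_epi_def by blast
  have ca: "Cod C a = A" "Cod C b = A" "a \<in> Arr C" "b \<in> Arr C" "Cod C e = B" "Dom C a = Dom C b"
    using co he unfolding is_coequalizer_def hom_def by auto
  have ha: "hom C a (Dom C a) A" and hb: "hom C b (Dom C a) A" using arr_hom[OF cat] ca by metis+
  have ge: "hom C (cmp C g e) A W" using cmp_hom[OF cat he hg] .
  have "cmp C (cmp C g e) a = cmp C (cmp C g e) b"
    using co cmp_assoc[OF cat ha he hg] cmp_assoc[OF cat hb he hg] unfolding is_coequalizer_def by metis
  hence "\<exists>!k. hom C k (Cod C e) W \<and> cmp C k e = cmp C g e"
    using co ge ca unfolding is_coequalizer_def by auto
  thus ?thesis using hg hh eq ca by metis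
qed

lemma product_exists:
  assumes fc: "finitely_complete C" and M: "M \<in> Obj C" and N: "N \<in> Obj C"
  shows "\<exists>Pr p1 p2. hom C p1 Pr M \<and> hom C p2 Pr N \<and>
     (\<forall>W m n. hom C m W M \<longrightarrow> hom C n W N \<longrightarrow> (\<exists>h. hom C h W Pr \<and> cmp C p1 h = m \<and> cmp C p2 h = n)) \<and>
     (\<forall>W h k. hom C h W Pr \<longrightarrow> hom C k W Pr \<longrightarrow> cmp C p1 h = cmp C p1 k \<longrightarrow> cmp C p2 h = cmp C p2 k \<longrightarrow> h = k)"
proof -
  have cat: "category C" using fc by (simp add: finitely_complete_def)
  obtain T where T: "is_terminal C T" using fc by (auto simp: finitely_complete_def)
  obtain tM where tM: "hom C tM M T" using T M unfolding is_terminal_def by blast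
  obtain tN where tN: "hom C tN N T" using T N unfolding is_terminal_def by blast
  obtain p q where pb: "is_pullback C tM tN p q" using fc tM tN unfolding finitely_complete_def hom_def by metis
  have hp: "hom C p (Dom C p) M" and hq: "hom C q (Dom C p) N" using pb_homs[OF cat pb tM tN] by auto
  have ex: "\<exists>h. hom C h W (Dom C p) \<and> cmp C p h = m \<and> cmp C q h = n" if hm: "hom C m W M" and hn: "hom C n W N" for W m n
  proof -
    have W: "W \<in> Obj C" using hm by (simp add: hom_def)
    have "hom C (cmp C tM m) W T" "hom C (cmp C tN n) W T" using cmp_hom[OF cat hm tM] cmp_hom[OF cat hn tN] .
    hence "cmp C tM m = cmp C tN n" using T W unfolding is_terminal_def by metis
    thus ?thesis using pb_ex[OF cat pb tM tN hm hn] by blast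
  qed
  show ?thesis using hp hq ex pb_uniq[OF cat pb tM tN] by blast
qed


lemma sq_rel:
  assumes cat: "category C" and hr1: "hom C r1 R P" and hr2: "hom C r2 R P" and hphi: "hom C \<phi> P Z"
    and pbS: "is_pullback C \<phi> \<phi> s1 s2" and hs1: "hom C s1 S P"
    and hp1: "hom C p1 Pr Z" and hp2: "hom C p2 Pr Z"
    and jm: "\<forall>W h k. hom C h W Pr \<longrightarrow> hom C k W Pr \<longrightarrow> cmp C p1 h = cmp C p1 k \<longrightarrow> cmp C p2 h = cmp C p2 k \<longrightarrow> h = k"
    and hh: "hom C hR R Pr" and e1: "cmp C p1 hR = cmp C \<phi> r1" and e2: "cmp C p2 hR = cmp C \<phi> r2"
    and pbD: "is_pullback C hR hR d1 d2" and hd1: "hom C d1 D R"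
  shows "is_square_rel C R r1 r2 S s1 s2 D d1 d2"
proof -
  have hd2: "hom C d2 D R" using pb_homs[OF cat pbD hh hh] hd1 by (auto simp: hom_def)
  have D: "Dom C d1 = D" using hd1 by (simp add: hom_def)
  have jmD: "jointly_monic C D d1 d2"
    unfolding jointly_monic_def using pb_uniq[OF cat pbD hh hh] D by metis
  have key: "(\<exists>h. hom C h W D \<and> cmp C d1 h = g1 \<and> cmp C d2 h = g2) \<longleftrightarrow>
         (rel_mem C S s1 s2 (cmp C r1 g1) (cmp C r1 g2) \<and>
          rel_mem C S s1 s2 (cmp C r2 g1) (cmp C r2 g2))"
    if g1: "hom C g1 W R" and g2: "hom C g2 W R" for W g1 g2
  proof -
    have "(\<exists>h. hom C h W D \<and> cmp C d1 h = g1 \<and> cmp C d2 h = g2) \<longleftrightarrow> rel_mem C D d1 d2 g1 g2"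
      using g1 unfolding rel_mem_def hom_def by auto
    also have "\<dots> \<longleftrightarrow> cmp C hR g1 = cmp C hR g2" using kp_rel[OF cat pbD hh hd1 g1 g2] .
    also have "\<dots> \<longleftrightarrow> cmp C \<phi> (cmp C r1 g1) = cmp C \<phi> (cmp C r1 g2) \<and> cmp C \<phi> (cmp C r2 g1) = cmp C \<phi> (cmp C r2 g2)"
    proof -
      have a1: "cmp C p1 (cmp C hR g) = cmp C \<phi> (cmp C r1 g)" "cmp C p2 (cmp C hR g) = cmp C \<phi> (cmp C r2 g)"
        if "hom C g W R" for g
        using cmp_assoc[OF cat that hh hp1] cmp_assoc[OF cat that hh hp2] e1 e2
          cmp_assoc[OF cat that hr1 hphi] cmp_assoc[OF cat that hr2 hphi] by simp_all
      show ?thesis using a1[OF g1] a1[OF g2] jm cmp_hom[OF cat g1 hh] cmp_hom[OF cat g2 hh] by metis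
    qed
    also have "\<dots> \<longleftrightarrow> (rel_mem C S s1 s2 (cmp C r1 g1) (cmp C r1 g2) \<and>
          rel_mem C S s1 s2 (cmp C r2 g1) (cmp C r2 g2))"
      using kp_rel[OF cat pbS hphi hs1] cmp_hom[OF cat g1 hr1] cmp_hom[OF cat g2 hr1]
        cmp_hom[OF cat g1 hr2] cmp_hom[OF cat g2 hr2] by metis
    finally show ?thesis .
  qed
  show ?thesis unfolding is_square_rel_def using hd1 hd2 jmD key by blast
qed


theorem proposition4p1:
  fixes C :: "('o, 'm) cat"
  assumes reg: "regular_category C" and gumm: "gumm_category C"
    and h_phi: "hom C \<phi> P Z" and h_sigma: "hom C \<sigma> Z P" and h_x: "hom C x P X"
    and h_f: "hom C f X Y" and h_s: "hom C s Y X" and h_y: "hom C y Z Y"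
    and h_u: "hom C u X U" and h_v: "hom C v Y V" and h_w: "hom C w U V"
    and i1: "cmp C \<phi> \<sigma> = idn C Z" and i2: "cmp C f s = idn C Y"
    and i3: "cmp C x \<sigma> = cmp C s y" and i4: "cmp C f x = cmp C y \<phi>"
    and ii: "regular_epi C x" "regular_epi C y"
    and iii: "cmp C w u = cmp C v f"
    and iv: "is_pullback C (cmp C v y) w \<phi> (cmp C u x)"
  shows "is_pullback C y f \<phi> x \<and> is_pullback C v w f u"
proof -
  have fc: "finitely_complete C" using reg by (simp add: regular_category_def)
  have cat: "category C" using fc by (simp add: finitely_complete_def)
  have pbstab: "\<And>f g p q. is_pullback C f g p q \<Longrightarrow> regular_epi C f \<Longrightarrow> regular_epi C q"
    using reg by (simp add: regular_category_def)
  define g where "g = cmp C u x"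
  have hg: "hom C g P U" unfolding g_def using cmp_hom[OF cat h_x h_u] .
  have hvy: "hom C (cmp C v y) Z V" using cmp_hom[OF cat h_y h_v] .
  have iv': "is_pullback C (cmp C v y) w \<phi> g" using iv g_def by simp
  have DP: "Dom C \<phi> = P" using h_phi by (simp add: hom_def)
  have outer_uniq: "a = b" if "hom C a W P" "hom C b W P" "cmp C \<phi> a = cmp C \<phi> b" "cmp C g a = cmp C g b" for W a b
    using pb_uniq[OF cat iv' hvy h_w] that DP by metis
  have outer_ex: "\<exists>h. hom C h W P \<and> cmp C \<phi> h = a \<and> cmp C g h = b"
    if "hom C a W Z" "hom C b W U" "cmp C (cmp C v y) a = cmp C w b" for W a b
    using pb_ex[OF cat iv' hvy h_w that] DP by metis
  have gx: "cmp C g a = cmp C u (cmp C x a)" if "hom C a W P" for W a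
    unfolding g_def using cmp_assoc[OF cat that h_x h_u] by simp
  obtain R r1 r2 where pbR: "is_pullback C g g r1 r2" and hr1: "hom C r1 R P" and hr2: "hom C r2 R P"
    using kp_exists[OF fc hg] by blast
  obtain S s1 s2 where pbS: "is_pullback C \<phi> \<phi> s1 s2" and hs1: "hom C s1 S P" and hs2: "hom C s2 S P"
    using kp_exists[OF fc h_phi] by blast
  obtain T t1 t2 where pbT: "is_pullback C x x t1 t2" and ht1: "hom C t1 T P" and ht2: "hom C t2 T P"
    using kp_exists[OF fc h_x] by blast
  have Zo: "Z \<in> Obj C" using h_phi by (simp add: hom_def)
  obtain Pr \<pi>1 \<pi>2 where hp1: "hom C \<pi>1 Pr Z" and hp2: "hom C \<pi>2 Pr Z"
    and prex: "\<forall>W m n. hom C m W Z \<longrightarrow> hom C n W Z \<longrightarrow> (\<exists>h. hom C h W Pr \<and> cmp C \<pi>1 h = m \<and> cmp C \<pi>2 h = n)"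
    and prjm: "\<forall>W h k. hom C h W Pr \<longrightarrow> hom C k W Pr \<longrightarrow> cmp C \<pi>1 h = cmp C \<pi>1 k \<longrightarrow> cmp C \<pi>2 h = cmp C \<pi>2 k \<longrightarrow> h = k"
    using product_exists[OF fc Zo Zo] by blast
  obtain hR where hhR: "hom C hR R Pr" and hR1: "cmp C \<pi>1 hR = cmp C \<phi> r1" and hR2: "cmp C \<pi>2 hR = cmp C \<phi> r2"
    using prex cmp_hom[OF cat hr1 h_phi] cmp_hom[OF cat hr2 h_phi] by blast
  obtain hT where hhT: "hom C hT T Pr" and hT1: "cmp C \<pi>1 hT = cmp C \<phi> t1" and hT2: "cmp C \<pi>2 hT = cmp C \<phi> t2"
    using prex cmp_hom[OF cat ht1 h_phi] cmp_hom[OF cat ht2 h_phi] by blast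
  obtain D d1 d2 where pbD: "is_pullback C hR hR d1 d2" and hd1: "hom C d1 D R" and hd2: "hom C d2 D R"
    using kp_exists[OF fc hhR] by blast
  obtain E e1 e2 where pbE: "is_pullback C hT hT e1 e2" and he1: "hom C e1 E T" and he2: "hom C e2 E T"
    using kp_exists[OF fc hhT] by blast
  have DR: "Dom C r1 = R" using hr1 by (simp add: hom_def)
  have DD: "Dom C d1 = D" using hd1 by (simp add: hom_def)
  have DT: "Dom C t1 = T" using ht1 by (simp add: hom_def)
  have DE: "Dom C e1 = E" using he1 by (simp add: hom_def)
  have "cmp C g t1 = cmp C g t2" using gx[OF ht1] gx[OF ht2] pb_comm[OF pbT] by simp
  then obtain i where hi: "hom C i T R" and i_1: "cmp C r1 i = t1" and i_2: "cmp C r2 i = t2"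
    using pb_ex[OF cat pbR hg hg ht1 ht2] DR by metis
  have hRi: "cmp C hR i = hT"
  proof -
    have "cmp C \<pi>1 (cmp C hR i) = cmp C \<pi>1 hT"
      using cmp_assoc[OF cat hi hhR hp1] hR1 cmp_assoc[OF cat hi hr1 h_phi] i_1 hT1 by simp
    moreover have "cmp C \<pi>2 (cmp C hR i) = cmp C \<pi>2 hT"
      using cmp_assoc[OF cat hi hhR hp2] hR2 cmp_assoc[OF cat hi hr2 h_phi] i_2 hT2 by simp
    ultimately show ?thesis using prjm cmp_hom[OF cat hi hhR] hhT by metis
  qed
  have "cmp C hR (cmp C i e1) = cmp C hR (cmp C i e2)"
    using cmp_assoc[OF cat he1 hi hhR] cmp_assoc[OF cat he2 hi hhR] hRi pb_comm[OF pbE] by simp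
  then obtain j where hj: "hom C j E D" and j1: "cmp C d1 j = cmp C i e1" and j2: "cmp C d2 j = cmp C i e2"
    using pb_ex[OF cat pbD hhR hhR cmp_hom[OF cat he1 hi] cmp_hom[OF cat he2 hi]] DD by metis
  have sqD: "is_square_rel C R r1 r2 S s1 s2 D d1 d2"
    using sq_rel[OF cat hr1 hr2 h_phi pbS hs1 hp1 hp2 prjm hhR hR1 hR2 pbD hd1] .
  have sqE: "is_square_rel C T t1 t2 S s1 s2 E e1 e2"
    using sq_rel[OF cat ht1 ht2 h_phi pbS hs1 hp1 hp2 prjm hhT hT1 hT2 pbE he1] .
  have eqR: "equiv_rel C P R r1 r2" using kp_equiv[OF cat pbR hg hr1] .
  have eqS: "equiv_rel C P S s1 s2" using kp_equiv[OF cat pbS h_phi hs1] .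
  have eqT: "equiv_rel C P T t1 t2" using kp_equiv[OF cat pbT h_x ht1] .
  have meet: "\<forall>W a b. hom C a W P \<longrightarrow> hom C b W P \<longrightarrow>
           rel_mem C R r1 r2 a b \<longrightarrow> rel_mem C S s1 s2 a b \<longrightarrow> rel_mem C T t1 t2 a b"
  proof (intro allI impI)
    fix W a b assume ha: "hom C a W P" and hb: "hom C b W P" and m1: "rel_mem C R r1 r2 a b"
      and m2: "rel_mem C S s1 s2 a b"
    have "a = b" using outer_uniq[OF ha hb] kp_rel[OF cat pbR hg hr1 ha hb] kp_rel[OF cat pbS h_phi hs1 ha hb] m1 m2 by blast
    thus "rel_mem C T t1 t2 a b" using kp_rel[OF cat pbT h_x ht1 ha hb] by simp
  qed
  have TR: "\<forall>W a b. hom C a W P \<longrightarrow> hom C b W P \<longrightarrow>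
           rel_mem C T t1 t2 a b \<longrightarrow> rel_mem C R r1 r2 a b"
    using kp_rel[OF cat pbT h_x ht1] kp_rel[OF cat pbR hg hr1] gx by metis
  have G: "\<forall>X R r1 r2 S s1 s2 T t1 t2 i D p1 p2 E q1 q2 j.
        equiv_rel C X R r1 r2 \<longrightarrow> equiv_rel C X S s1 s2 \<longrightarrow> equiv_rel C X T t1 t2 \<longrightarrow>
        (\<forall>W a b. hom C a W X \<longrightarrow> hom C b W X \<longrightarrow>
           rel_mem C R r1 r2 a b \<longrightarrow> rel_mem C S s1 s2 a b \<longrightarrow> rel_mem C T t1 t2 a b) \<longrightarrow>
        (\<forall>W a b. hom C a W X \<longrightarrow> hom C b W X \<longrightarrow>
           rel_mem C T t1 t2 a b \<longrightarrow> rel_mem C R r1 r2 a b) \<longrightarrow>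
        hom C i T R \<longrightarrow> cmp C r1 i = t1 \<longrightarrow> cmp C r2 i = t2 \<longrightarrow>
        is_square_rel C R r1 r2 S s1 s2 D p1 p2 \<longrightarrow>
        is_square_rel C T t1 t2 S s1 s2 E q1 q2 \<longrightarrow>
        hom C j E D \<longrightarrow> cmp C p1 j = cmp C i q1 \<longrightarrow> cmp C p2 j = cmp C i q2 \<longrightarrow>
        is_pullback C i p1 q1 j \<and> is_pullback C i p2 q2 j"
    using gumm unfolding gumm_category_def by blast
  have gpb: "is_pullback C i d1 e1 j"
    using mp[OF mp[OF mp[OF mp[OF mp[OF mp[OF mp[OF mp[OF mp[OF mp[OF mp[OF mp[OF mp[OF G[THEN spec[where x=P], THEN spec[where x=R], THEN spec[where x=r1], THEN spec[where x=r2], THEN spec[where x=S], THEN spec[where x=s1], THEN spec[where x=s2], THEN spec[where x=T], THEN spec[where x=t1], THEN spec[where x=t2], THEN spec[where x=i], THEN spec[where x=D], THEN spec[where x=d1], THEN spec[where x=d2], THEN spec[where x=E], THEN spec[where x=e1], THEN spec[where x=e2], THEN spec[where x=j]] eqR] eqS] eqT] meet] TR] hi] i_1] i_2] sqD] sqE] hj] j1] j2]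
    by blast
  have key: "cmp C x p = cmp C x q"
    if hp: "hom C p W P" and hq: "hom C q W P" and ef: "cmp C f (cmp C x p) = cmp C f (cmp C x q)"
      and eu: "cmp C u (cmp C x p) = cmp C u (cmp C x q)" for W p q
  proof -
    have xs: "cmp C x (cmp C \<sigma> (cmp C \<phi> p)) = cmp C s (cmp C f (cmp C x p))" if hp: "hom C p W P" for p
    proof -
      have h1: "hom C (cmp C \<phi> p) W Z" using cmp_hom[OF cat hp h_phi] .
      have "cmp C x (cmp C \<sigma> (cmp C \<phi> p)) = cmp C (cmp C s y) (cmp C \<phi> p)"
        using cmp_assoc[OF cat h1 h_sigma h_x] i3 by simp
      also have "\<dots> = cmp C s (cmp C y (cmp C \<phi> p))" using cmp_assoc[OF cat h1 h_y h_s] by simp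
      also have "\<dots> = cmp C s (cmp C f (cmp C x p))"
        using cmp_assoc[OF cat hp h_phi h_y] cmp_assoc[OF cat hp h_x h_f] i4 by simp
      finally show ?thesis .
    qed
    have phs: "cmp C \<phi> (cmp C \<sigma> (cmp C \<phi> p)) = cmp C \<phi> p" if hp: "hom C p W P" for p
    proof -
      have h1: "hom C (cmp C \<phi> p) W Z" using cmp_hom[OF cat hp h_phi] .
      show ?thesis using cmp_assoc[OF cat h1 h_sigma h_phi] i1 id_l[OF cat h1] by simp
    qed
    define p' where "p' = cmp C \<sigma> (cmp C \<phi> p)"
    define q' where "q' = cmp C \<sigma> (cmp C \<phi> q)"
    have hp': "hom C p' W P" unfolding p'_def using cmp_hom[OF cat cmp_hom[OF cat hp h_phi] h_sigma] .
    have hq': "hom C q' W P" unfolding q'_def using cmp_hom[OF cat cmp_hom[OF cat hq h_phi] h_sigma] .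
    have xpq': "cmp C x p' = cmp C x q'" unfolding p'_def q'_def using xs[OF hp] xs[OF hq] ef by simp
    obtain a where ha: "hom C a W T" and a1: "cmp C t1 a = p'" and a2: "cmp C t2 a = q'"
      using pb_ex[OF cat pbT h_x h_x hp' hq' xpq'] DT by metis
    have gpq: "cmp C g p = cmp C g q" using gx[OF hp] gx[OF hq] eu by simp
    obtain G2 where hG2: "hom C G2 W R" and G21: "cmp C r1 G2 = p" and G22: "cmp C r2 G2 = q"
      using pb_ex[OF cat pbR hg hg hp hq gpq] DR by metis
    define G1 where "G1 = cmp C i a"
    have hG1: "hom C G1 W R" unfolding G1_def using cmp_hom[OF cat ha hi] .
    have G11: "cmp C r1 G1 = p'" unfolding G1_def using cmp_assoc[OF cat ha hi hr1] i_1 a1 by simp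
    have G12: "cmp C r2 G1 = q'" unfolding G1_def using cmp_assoc[OF cat ha hi hr2] i_2 a2 by simp
    have "cmp C \<pi>1 (cmp C hR G1) = cmp C \<pi>1 (cmp C hR G2)"
      using cmp_assoc[OF cat hG1 hhR hp1] cmp_assoc[OF cat hG2 hhR hp1] hR1
        cmp_assoc[OF cat hG1 hr1 h_phi] cmp_assoc[OF cat hG2 hr1 h_phi] G11 G21 phs[OF hp] p'_def by simp
    moreover have "cmp C \<pi>2 (cmp C hR G1) = cmp C \<pi>2 (cmp C hR G2)"
      using cmp_assoc[OF cat hG1 hhR hp2] cmp_assoc[OF cat hG2 hhR hp2] hR2
        cmp_assoc[OF cat hG1 hr2 h_phi] cmp_assoc[OF cat hG2 hr2 h_phi] G12 G22 phs[OF hq] q'_def by simp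
    ultimately have "cmp C hR G1 = cmp C hR G2"
      using prjm cmp_hom[OF cat hG1 hhR] cmp_hom[OF cat hG2 hhR] by metis
    then obtain b where hb: "hom C b W D" and b1: "cmp C d1 b = G1" and b2: "cmp C d2 b = G2"
      using pb_ex[OF cat pbD hhR hhR hG1 hG2] DD by metis
    have "cmp C i a = cmp C d1 b" using b1 G1_def by simp
    then obtain h where hh: "hom C h W E" and h1: "cmp C e1 h = a" and h2: "cmp C j h = b"
      using pb_ex[OF cat gpb hi hd1 ha hb] DE by metis
    have "cmp C i (cmp C e2 h) = G2"
      using cmp_assoc[OF cat hh he2 hi] cmp_assoc[OF cat hh hj hd2] j2 h2 b2 by simp
    hence "cmp C t1 (cmp C e2 h) = p" "cmp C t2 (cmp C e2 h) = q"
      using cmp_assoc[OF cat cmp_hom[OF cat hh he2] hi hr1] cmp_assoc[OF cat cmp_hom[OF cat hh he2] hi hr2]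
        i_1 i_2 G21 G22 by auto
    thus ?thesis
      using cmp_assoc[OF cat cmp_hom[OF cat hh he2] ht1 h_x] cmp_assoc[OF cat cmp_hom[OF cat hh he2] ht2 h_x]
        pb_comm[OF pbT] by metis
  qed
  have monoX: "a = b"
    if ha: "hom C a W X" and hb: "hom C b W X" and ef: "cmp C f a = cmp C f b" and eu: "cmp C u a = cmp C u b" for W a b
  proof -
    obtain p1 q1 where pb1: "is_pullback C x a p1 q1"
      using fc h_x ha unfolding finitely_complete_def hom_def by metis
    have hp1: "hom C p1 (Dom C p1) P" and hq1: "hom C q1 (Dom C p1) W" using pb_homs[OF cat pb1 h_x ha] by auto
    have r1: "regular_epi C q1" using pbstab[OF pb1 ii(1)] .
    have hbq: "hom C (cmp C b q1) (Dom C p1) X" using cmp_hom[OF cat hq1 hb] .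
    obtain p2 q2 where pb2: "is_pullback C x (cmp C b q1) p2 q2"
      using fc h_x hbq unfolding finitely_complete_def hom_def by metis
    have hp2: "hom C p2 (Dom C p2) P" and hq2: "hom C q2 (Dom C p2) (Dom C p1)" using pb_homs[OF cat pb2 h_x hbq] by auto
    have r2: "regular_epi C q2" using pbstab[OF pb2 ii(1)] .
    define c where "c = cmp C q1 q2"
    have hc: "hom C c (Dom C p2) W" unfolding c_def using cmp_hom[OF cat hq2 hq1] .
    define pp where "pp = cmp C p1 q2"
    have hpp: "hom C pp (Dom C p2) P" unfolding pp_def using cmp_hom[OF cat hq2 hp1] .
    have xpp: "cmp C x pp = cmp C a c"
      unfolding pp_def c_def using cmp_assoc[OF cat hq2 hp1 h_x] cmp_assoc[OF cat hq2 hq1 ha] pb_comm[OF pb1] by simp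
    have xp2: "cmp C x p2 = cmp C b c"
      unfolding c_def using cmp_assoc[OF cat hq2 hq1 hb] pb_comm[OF pb2] by simp
    have "cmp C f (cmp C a c) = cmp C f (cmp C b c)"
      using cmp_assoc[OF cat hc ha h_f] cmp_assoc[OF cat hc hb h_f] ef by simp
    moreover have "cmp C u (cmp C a c) = cmp C u (cmp C b c)"
      using cmp_assoc[OF cat hc ha h_u] cmp_assoc[OF cat hc hb h_u] eu by simp
    ultimately have "cmp C a c = cmp C b c" using key[OF hpp hp2] xpp xp2 by simp
    hence "cmp C (cmp C a q1) q2 = cmp C (cmp C b q1) q2"
      unfolding c_def using cmp_assoc[OF cat hq2 hq1 ha] cmp_assoc[OF cat hq2 hq1 hb] by simp
    hence "cmp C a q1 = cmp C b q1" using reg_epi[OF cat r2 hq2 cmp_hom[OF cat hq1 ha] cmp_hom[OF cat hq1 hb]] by simp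
    thus ?thesis using reg_epi[OF cat r1 hq1 ha hb] by simp
  qed
  have Ax: "Dom C x = P" "Cod C x = X" "x \<in> Arr C" using h_x by (auto simp: hom_def)
  have Af: "Dom C f = X" "Cod C f = Y" "f \<in> Arr C" using h_f by (auto simp: hom_def)
  have Ay: "Dom C y = Z" "Cod C y = Y" "y \<in> Arr C" using h_y by (auto simp: hom_def)
  have Au: "Dom C u = X" "Cod C u = U" "u \<in> Arr C" using h_u by (auto simp: hom_def)
  have Av: "Dom C v = Y" "Cod C v = V" "v \<in> Arr C" using h_v by (auto simp: hom_def)
  have Aw: "Dom C w = U" "Cod C w = V" "w \<in> Arr C" using h_w by (auto simp: hom_def)
  have Aphi: "Dom C \<phi> = P" "Cod C \<phi> = Z" "\<phi> \<in> Arr C" using h_phi by (auto simp: hom_def)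
  have left: "is_pullback C y f \<phi> x"
    unfolding is_pullback_def
  proof (intro conjI allI impI)
    show "cmp C y \<phi> = cmp C f x" using i4 by simp
  next
    fix W a b assume ha': "hom C a W (Dom C y)" and hb': "hom C b W (Dom C f)" and e: "cmp C y a = cmp C f b"
    have ha: "hom C a W Z" and hb: "hom C b W X" using ha' hb' Ay Af by auto
    have "cmp C (cmp C v y) a = cmp C w (cmp C u b)"
      using cmp_assoc[OF cat ha h_y h_v] cmp_assoc[OF cat hb h_f h_v] cmp_assoc[OF cat hb h_u h_w] iii e by simp
    then obtain h where hh: "hom C h W P" and h1: "cmp C \<phi> h = a" and h2: "cmp C g h = cmp C u b"
      using outer_ex[OF ha cmp_hom[OF cat hb h_u]] by blast
    have hxh: "hom C (cmp C x h) W X" using cmp_hom[OF cat hh h_x] .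
    have "cmp C f (cmp C x h) = cmp C f b"
      using cmp_assoc[OF cat hh h_x h_f] i4 cmp_assoc[OF cat hh h_phi h_y] h1 e by simp
    moreover have "cmp C u (cmp C x h) = cmp C u b" using gx[OF hh] h2 by simp
    ultimately have xh: "cmp C x h = b" using monoX[OF hxh hb] by simp
    show "\<exists>!h. hom C h W (Dom C \<phi>) \<and> cmp C \<phi> h = a \<and> cmp C x h = b"
    proof (rule ex1I[of _ h])
      show "hom C h W (Dom C \<phi>) \<and> cmp C \<phi> h = a \<and> cmp C x h = b" using hh h1 xh Aphi by simp
    next
      fix k assume "hom C k W (Dom C \<phi>) \<and> cmp C \<phi> k = a \<and> cmp C x k = b"
      hence hk: "hom C k W P" and k1: "cmp C \<phi> k = a" and k2: "cmp C x k = b" using Aphi by auto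
      show "k = h" using outer_uniq[OF hk hh] k1 h1 gx[OF hk] gx[OF hh] k2 xh by simp
    qed
  qed (use Ax Af Ay Aphi in auto)
  have right: "is_pullback C v w f u"
    unfolding is_pullback_def
  proof (intro conjI allI impI)
    show "cmp C v f = cmp C w u" using iii by simp
  next
    fix W a b assume ha': "hom C a W (Dom C v)" and hb': "hom C b W (Dom C w)" and e: "cmp C v a = cmp C w b"
    have ha: "hom C a W Y" and hb: "hom C b W U" using ha' hb' Av Aw by auto
    obtain pz e0 where pb1: "is_pullback C y a pz e0"
      using fc h_y ha unfolding finitely_complete_def hom_def by metis
    define W1 where "W1 = Dom C pz"
    have hpz: "hom C pz W1 Z" and he0: "hom C e0 W1 W" using pb_homs[OF cat pb1 h_y ha] W1_def by auto
    have re: "regular_epi C e0" using pbstab[OF pb1 ii(2)] .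
    have c1: "cmp C y pz = cmp C a e0" using pb_comm[OF pb1] .
    have "cmp C (cmp C v y) pz = cmp C w (cmp C b e0)"
      using cmp_assoc[OF cat hpz h_y h_v] c1 cmp_assoc[OF cat he0 ha h_v] e cmp_assoc[OF cat he0 hb h_w] by simp
    then obtain p where hp: "hom C p W1 P" and p1: "cmp C \<phi> p = pz" and p2: "cmp C g p = cmp C b e0"
      using outer_ex[OF hpz cmp_hom[OF cat he0 hb]] by blast
    define h1 where "h1 = cmp C x p"
    have hh1: "hom C h1 W1 X" unfolding h1_def using cmp_hom[OF cat hp h_x] .
    have fh1: "cmp C f h1 = cmp C a e0"
      unfolding h1_def using cmp_assoc[OF cat hp h_x h_f] i4 cmp_assoc[OF cat hp h_phi h_y] p1 c1 by simp
    have uh1: "cmp C u h1 = cmp C b e0" unfolding h1_def using gx[OF hp] p2 by simp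
    obtain k1 k2 where co: "is_coequalizer C k1 k2 e0" using re unfolding regular_epi_def by blast
    have ck: "Cod C k1 = W1" "Cod C k2 = W1" "Dom C k2 = Dom C k1" "k1 \<in> Arr C" "k2 \<in> Arr C" "Cod C e0 = W"
      "cmp C e0 k1 = cmp C e0 k2"
      using co he0 unfolding is_coequalizer_def hom_def by auto
    have hk1: "hom C k1 (Dom C k1) W1" and hk2: "hom C k2 (Dom C k1) W1" using arr_hom[OF cat] ck by metis+
    have eq12: "cmp C h1 k1 = cmp C h1 k2"
    proof (rule monoX[OF cmp_hom[OF cat hk1 hh1] cmp_hom[OF cat hk2 hh1]])
      show "cmp C f (cmp C h1 k1) = cmp C f (cmp C h1 k2)"
        using cmp_assoc[OF cat hk1 hh1 h_f] cmp_assoc[OF cat hk2 hh1 h_f] fh1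
          cmp_assoc[OF cat hk1 he0 ha] cmp_assoc[OF cat hk2 he0 ha] ck by simp
      show "cmp C u (cmp C h1 k1) = cmp C u (cmp C h1 k2)"
        using cmp_assoc[OF cat hk1 hh1 h_u] cmp_assoc[OF cat hk2 hh1 h_u] uh1
          cmp_assoc[OF cat hk1 he0 hb] cmp_assoc[OF cat hk2 he0 hb] ck by simp
    qed
    have "hom C h1 (Cod C k1) X" using hh1 ck by simp
    then obtain h where hh: "hom C h W X" and he: "cmp C h e0 = h1"
      using co eq12 ck unfolding is_coequalizer_def by metis
    have fh: "cmp C f h = a"
      using reg_epi[OF cat re he0 cmp_hom[OF cat hh h_f] ha] cmp_assoc[OF cat he0 hh h_f] he fh1 by simp
    have uh: "cmp C u h = b"
      using reg_epi[OF cat re he0 cmp_hom[OF cat hh h_u] hb] cmp_assoc[OF cat he0 hh h_u] he uh1 by simp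
    show "\<exists>!h. hom C h W (Dom C f) \<and> cmp C f h = a \<and> cmp C u h = b"
    proof (rule ex1I[of _ h])
      show "hom C h W (Dom C f) \<and> cmp C f h = a \<and> cmp C u h = b" using hh fh uh Af by simp
    next
      fix k assume "hom C k W (Dom C f) \<and> cmp C f k = a \<and> cmp C u k = b"
      thus "k = h" using monoX[OF _ hh] fh uh Af by auto
    qed
  qed (use Af Au Av Aw in auto)
  show ?thesis using left right by simp
qed

end
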